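(* Let $\mathbf f:\mathbb{R}/\mathbb{Z}\to\mathbb{R}^n$ satisfy $L_1\,d_{\mathbb{R}/\mathbb{Z}}(\theta,\theta')\le\|\mathbf f(\theta)-\mathbf f(\theta')\|\le L_2\,d_{\mathbb{R}/\mathbb{Z}}(\theta,\theta')$ for all $\theta,\theta'$, with constants $0<L_1\le L_2$. For each $m$ let $0\le\theta_1<\dots<\theta_m<1$ (indices cyclic, $\theta_{k+m}=\theta_k+1$) satisfy the equilateral condition $\|\Delta_k\mathbf f\|=L_m/m$ for $k=1,\dots,m$, where $L_m=\sum_{k=1}^m\|\Delta_k\mathbf f\|$. Then for all sufficiently large $m$ and all integers $i,j$ with $|i-j|\le[\frac m2]$, \[ A_i\|\Delta_i^j\mathbf f\|\ge\frac{L_mL_1}{L_2}\frac{|i-j|-\frac12}{m},\quad A_i\|\Delta_i^{j+1}\mathbf f\|\ge\frac{L_mL_1}{L_2}\frac{|i-j|-\frac12}{m}, \] \[ A_{ij}\|\Delta_i^j\mathbf f\|\ge\frac{L_mL_1}{L_2}\frac{|i-j|-\frac14}{m},\quad A_{ij}\|\Delta_i^{j+1}\mathbf f\|\ge\frac{L_mL_1}{2L_2}\frac{|i-j|}{m}. \]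
   Context: $\Delta_i^j\mathbf f=\mathbf f(\theta_j)-\mathbf f(\theta_i)$, $\Delta_i\mathbf f=\Delta_i^{i+1}\mathbf f$, $\mathbf f$ regarded as $1$-periodic on $\mathbb{R}$; $[x]$ is the integer part. For a doubly indexed sequence $u_{ij}$: $A_i(u)=\frac{u_{ij}+u_{(i+1)j}}2$ and $A_{ij}(u)=\frac{u_{ij}+u_{(i+1)j}+u_{i(j+1)}+u_{(i+1)(j+1)}}4$. Thus e.g. $A_i\|\Delta_i^{j+1}\mathbf f\|=\frac12(\|\Delta_i^{j+1}\mathbf f\|+\|\Delta_{i+1}^{j+1}\mathbf f\|)$ and $A_{ij}\|\Delta_i^{j}\mathbf f\|=\frac14(\|\Delta_i^j\mathbf f\|+\|\Delta_{i+1}^j\mathbf f\|+\|\Delta_i^{j+1}\mathbf f\|+\|\Delta_{i+1}^{j+1}\mathbf f\|)$. *)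

theory Defs
  imports "HOL-Analysis.Analysis"
begin

definition dRZ :: "real \<Rightarrow> real \<Rightarrow> real" where
  "dRZ s t = min (frac (s - t)) (1 - frac (s - t))"

definition Delta :: "(real \<Rightarrow> 'a::real_normed_vector) \<Rightarrow> (int \<Rightarrow> real) \<Rightarrow> int \<Rightarrow> int \<Rightarrow> 'a" where
  "Delta f \<theta> i j = f (\<theta> j) - f (\<theta> i)"

definition Ai :: "(int \<Rightarrow> int \<Rightarrow> real) \<Rightarrow> int \<Rightarrow> int \<Rightarrow> real" where
  "Ai u i j = (u i j + u (i + 1) j) / 2"

definition Aij :: "(int \<Rightarrow> int \<Rightarrow> real) \<Rightarrow> int \<Rightarrow> int \<Rightarrow> real" where
  "Aij u i j = (u i j + u (i + 1) j + u i (j + 1) + u (i + 1) (j + 1)) / 4"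

definition polylen :: "(real \<Rightarrow> 'a::real_normed_vector) \<Rightarrow> (int \<Rightarrow> real) \<Rightarrow> nat \<Rightarrow> real" where
  "polylen f \<theta> m = (\<Sum>k=1..int m. norm (Delta f \<theta> k (k + 1)))"

end

theory Submission
  imports Defs "HOL-Analysis.Analysis"
begin

lemma quad_ident:
  fixes P0 P1 Q0 Q1 :: "'a::real_inner"
  shows "(norm (Q0 - P0))^2 + (norm (Q1 - P1))^2 \<le> (norm (Q0 - P1))^2 + (norm (Q1 - P0))^2
           + 2 * norm (P1 - P0) * norm (Q1 - Q0)"
proof -
  have e: "(norm (Q0 - P0))^2 + (norm (Q1 - P1))^2 = (norm (Q0 - P1))^2 + (norm (Q1 - P0))^2
           - 2 * inner (P1 - P0) (Q1 - Q0)"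
    by (simp add: power2_norm_eq_inner inner_diff_left inner_diff_right inner_commute algebra_simps)
  have "\<bar>inner (P1 - P0) (Q1 - Q0)\<bar> \<le> norm (P1 - P0) * norm (Q1 - Q0)"
    by (rule Cauchy_Schwarz_ineq2)
  then show ?thesis using e by linarith
qed

lemma g_lip:
  fixes x y :: int and m :: nat
  assumes "m \<ge> 1" "2 * \<bar>x\<bar> \<le> int m"
  shows "min (y mod int m) (int m - y mod int m) \<ge> \<bar>x\<bar> - \<bar>y - x\<bar>"
proof -
  define r where "r = y mod int m"
  define q where "q = y div int m"
  have y: "y = r + q * int m" unfolding r_def q_def by simp
  have r: "0 \<le> r" "r < int m" unfolding r_def using assms by auto
  define Q where "Q = q * int m"
  have "q \<le> -2 \<or> q = -1 \<or> q = 0 \<or> q = 1 \<or> q \<ge> 2" by linarith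
  moreover have "q \<le> -2 \<Longrightarrow> Q \<le> - 2 * int m" unfolding Q_def
    using mult_right_mono[of q "-2" "int m"] by simp
  moreover have "q \<ge> 2 \<Longrightarrow> Q \<ge> 2 * int m" unfolding Q_def
    using mult_right_mono[of 2 q "int m"] by simp
  ultimately have QQ: "Q \<le> - 2 * int m \<or> Q = - int m \<or> Q = 0 \<or> Q = int m \<or> Q \<ge> 2 * int m"
    unfolding Q_def by auto
  have y': "y = r + Q" using y Q_def by simp
  show ?thesis unfolding r_def[symmetric] using QQ y' r assms(2) by (auto simp: abs_if)
qed

lemma g_exact:
  fixes y :: int and m :: nat
  assumes "m \<ge> 1" "2 * \<bar>y\<bar> \<le> int m"
  shows "min (y mod int m) (int m - y mod int m) = \<bar>y\<bar>"
proof (cases "y \<ge> 0")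
  case True
  then have "y mod int m = y" using assms by (simp add: mod_pos_pos_trivial)
  then show ?thesis using assms True by auto
next
  case False
  then have "(y + int m) mod int m = y + int m" using assms
    by (intro mod_pos_pos_trivial) auto
  then have "y mod int m = y + int m" by simp
  then show ?thesis using assms False by auto
qed


lemma per_f_nat:
  assumes "\<And>t. f (t + 1) = f t"
  shows "f (t + real n) = f t"
proof (induction n)
  case 0 then show ?case by simp
next
  case (Suc n)
  have "f (t + real (Suc n)) = f ((t + real n) + 1)" by (simp add: algebra_simps)
  then show ?case using assms Suc by simp
qed

lemma per_f:
  assumes "\<And>t. f (t + 1) = f t"
  shows "f (t + real_of_int q) = f t"
proof (cases "q \<ge> 0")
  case True
  have e: "real_of_int q = real (nat q)" using True by simp
  have "f (t + real (nat q)) = f t" by (rule per_f_nat[where f=f, OF assms])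
  then show ?thesis by (simp only: e)
next
  case False
  have e: "(t + real_of_int q) + real (nat (-q)) = t" using False by simp
  have "f ((t + real_of_int q) + real (nat (-q))) = f (t + real_of_int q)"
    by (rule per_f_nat[where f=f, OF assms])
  then show ?thesis by (simp only: e)
qed

lemma per_th_nat:
  assumes "\<And>k. th (k + int m) = th k + 1"
  shows "th (k + int n * int m) = th k + real n"
proof (induction n)
  case 0 then show ?case by simp
next
  case (Suc n)
  have "th (k + int (Suc n) * int m) = th ((k + int n * int m) + int m)"
    by (simp add: algebra_simps)
  also have "\<dots> = th k + real n + 1" using assms Suc by simp
  finally show ?case by simp
qed

lemma per_th:
  assumes "\<And>k. th (k + int m) = th k + 1"
  shows "th (k + q * int m) = th k + real_of_int q"
proof (cases "q \<ge> 0")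
  case True
  have e1: "int (nat q) = q" using True by simp
  have e2: "real (nat q) = real_of_int q" using True by simp
  have "th (k + int (nat q) * int m) = th k + real (nat q)"
    by (rule per_th_nat[where th=th and m=m, OF assms])
  then show ?thesis by (simp only: e1 e2)
next
  case False
  have e1: "(k + q * int m) + int (nat (-q)) * int m = k" using False by (simp add: algebra_simps)
  have e2: "real (nat (-q)) = - real_of_int q" using False by simp
  have "th ((k + q * int m) + int (nat (-q)) * int m) = th (k + q * int m) + real (nat (-q))"
    by (rule per_th_nat[where th=th and m=m, OF assms])
  then have "th k = th (k + q * int m) - real_of_int q" by (simp only: e1 e2)
  then show ?thesis by simp
qed

lemma key4:
  fixes D1 D2 \<alpha> \<beta> T c e :: real
  assumes "D1 \<ge> T" "D2 \<ge> T" "\<alpha> \<ge> T - c" "\<beta> \<ge> T - c" "T \<ge> c" "c \<ge> 0"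
    "D1^2 + D2^2 \<le> \<alpha>^2 + \<beta>^2 + e" "2 * T * c \<ge> c^2 + e"
  shows "D1 + D2 + \<alpha> + \<beta> \<ge> 4 * T - c"
proof (rule ccontr)
  assume "\<not> ?thesis"
  then have lt: "\<alpha> + \<beta> < 2 * T - c" using assms(1,2) by linarith
  define p where "p = \<alpha> - (T - c)"
  define q where "q = \<beta> - (T - c)"
  have p: "p \<ge> 0" "q \<ge> 0" "p + q < c" using assms lt unfolding p_def q_def by auto
  have a2: "\<alpha>^2 + \<beta>^2 = 2*(T-c)^2 + 2*(T-c)*(p+q) + p^2 + q^2"
    unfolding p_def q_def by (simp add: power2_eq_square algebra_simps)
  have "p^2 + q^2 \<le> (p+q)^2" using p by (simp add: power2_eq_square algebra_simps)
  also have "(p+q)^2 < c^2" using p by (intro power_strict_mono) auto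
  finally have b1: "p^2 + q^2 < c^2" .
  have b2: "(T-c)*(p+q) \<le> (T-c)*c" using p assms(5) by (intro mult_left_mono) auto
  have "\<alpha>^2 + \<beta>^2 < 2*T^2 - 2*T*c + c^2"
    using a2 b1 b2 by (simp add: power2_eq_square algebra_simps)
  moreover have "D1^2 \<ge> T^2" "D2^2 \<ge> T^2" using assms by (auto intro!: power_mono)
  ultimately show False using assms(7,8) by linarith
qed

lemma half_le: "2 * y \<le> (a::real) \<Longrightarrow> y \<le> a / 2" by simp
lemma quarter_le: "4 * y \<le> (a::real) \<Longrightarrow> y \<le> a / 4" by simp

lemma main_m:
  fixes f :: "real \<Rightarrow> real ^ 'n" and th :: "int \<Rightarrow> real" and m :: nat
  assumes periodic: "\<And>t. f (t + 1) = f t"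
    and L1pos: "0 < L1" and L12: "L1 \<le> L2"
    and bilip: "\<And>s t. L1 * dRZ s t \<le> norm (f s - f t) \<and> norm (f s - f t) \<le> L2 * dRZ s t"
    and nonneg: "0 \<le> th 1"
    and incr: "\<And>k. 1 \<le> k \<Longrightarrow> k < int m \<Longrightarrow> th k < th (k + 1)"
    and below1: "th (int m) < 1"
    and cyclic: "\<And>k. th (k + int m) = th k + 1"
    and equilateral: "\<And>k. 1 \<le> k \<Longrightarrow> k \<le> int m \<Longrightarrow>
        norm (Delta f th k (k + 1)) = polylen f th m / real m"
    and m4: "m \<ge> 4" and mbig: "2 * L2^2 \<le> (real m - 2) * L1^2"
    and ij: "\<bar>i - j\<bar> \<le> int (m div 2)"
  shows "(let Lm = polylen f th m;
          u = (\<lambda>a b. norm (Delta f th a b))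
      in Ai u i j \<ge> Lm * L1 / L2 * ((real_of_int \<bar>i - j\<bar> - 1/2) / real m)
       \<and> Ai u i (j + 1) \<ge> Lm * L1 / L2 * ((real_of_int \<bar>i - j\<bar> - 1/2) / real m)
       \<and> Aij u i j \<ge> Lm * L1 / L2 * ((real_of_int \<bar>i - j\<bar> - 1/4) / real m)
       \<and> Aij u i (j + 1) \<ge> Lm * L1 / (2 * L2) * (real_of_int \<bar>i - j\<bar> / real m))"
proof -
  define l where "l = polylen f th m / real m"
  define c where "c = L1 * l / L2"
  define \<gamma> where "\<gamma> = l / L2"
  define u where "u = (\<lambda>a b. norm (Delta f th a b))"
  define g where "g = (\<lambda>y::int. min (y mod int m) (int m - y mod int m))"
  have L2pos: "L2 > 0" using L1pos L12 by linarith
  have m1: "m \<ge> 1" using m4 by simp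
  have decomp: "\<exists>r q. k = r + q * int m \<and> 1 \<le> r \<and> r \<le> int m" for k
  proof -
    have "k = ((k - 1) mod int m + 1) + ((k - 1) div int m) * int m" by simp
    moreover have "(k - 1) mod int m < int m" "0 \<le> (k - 1) mod int m" using m1 by auto
    moreover have "1 \<le> (k - 1) mod int m + 1" "(k - 1) mod int m + 1 \<le> int m"
      using calculation(2,3) by auto
    ultimately show ?thesis by blast
  qed
  have step: "th k < th (k + 1)" for k
  proof -
    obtain r q where rq: "k = r + q * int m" "1 \<le> r" "r \<le> int m" using decomp by blast
    have a: "th k = th r + q" using per_th[where th=th and m=m, OF cyclic] rq by simp
    have b: "th (k + 1) = th (r + 1) + q" using per_th[where th=th and m=m, OF cyclic, of "r+1" q] rq
      by (simp add: algebra_simps)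
    show ?thesis
    proof (cases "r < int m")
      case True then show ?thesis using a b incr rq by simp
    next
      case False
      then have "r = int m" using rq by simp
      moreover have "th (1 + int m) = th 1 + 1" using cyclic by simp
      ultimately show ?thesis using a b nonneg below1 by (simp add: add.commute)
    qed
  qed
  have smono: "th k < th (k + int n)" if "n \<ge> 1" for k n
    using that
  proof (induction n rule: dec_induct)
    case base then show ?case using step by simp
  next
    case (step n)
    have "th (k + int n) < th (k + int n + 1)" using \<open>\<And>k. th k < th (k+1)\<close> .
    moreover have e: "k + int (Suc n) = k + int n + 1" by simp
    ultimately show ?case using step.IH unfolding e by linarith
  qed
  have mono: "th k \<le> th (k + int n)" for k n
    using smono[where n=n and k=k] by (cases "n = 0") auto
  have lall: "norm (f (th (k + 1)) - f (th k)) = l" for k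
  proof -
    obtain r q where rq: "k = r + q * int m" "1 \<le> r" "r \<le> int m" using decomp by blast
    have a: "th k = th r + q" using per_th[where th=th and m=m, OF cyclic] rq by simp
    have b: "th (k + 1) = th (r + 1) + q" using per_th[where th=th and m=m, OF cyclic, of "r+1" q] rq
      by (simp add: algebra_simps)
    show ?thesis using equilateral[OF rq(2,3)] a b per_f[where f=f, OF periodic]
      unfolding l_def Delta_def by simp
  qed
  have l0: "l \<ge> 0" using lall[of 0] by (metis norm_ge_zero)
  have gap: "th (k + 1) - th k \<ge> \<gamma>" for k
  proof -
    have lt: "th (k + 1) < th k + 1"
      using smono[where n="m - 1" and k="k + 1"] cyclic[of k] m4 by (simp add: of_nat_diff add.assoc)
    have "frac (th (k + 1) - th k) = th (k + 1) - th k"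
      using lt step[of k] by (simp add: frac_eq)
    then have "dRZ (th (k + 1)) (th k) \<le> th (k + 1) - th k" unfolding dRZ_def by linarith
    then have "l \<le> L2 * (th (k + 1) - th k)" using bilip[of "th (k+1)" "th k"] lall[of k] L2pos
      by (metis mult_left_mono less_le order_trans)
    then show ?thesis unfolding \<gamma>_def using L2pos by (simp add: divide_le_eq mult.commute)
  qed
  have gaps: "th (a + int n) - th a \<ge> real n * \<gamma>" for a n
  proof (induction n)
    case 0 then show ?case by simp
  next
    case (Suc n)
    have "th (a + int n + 1) - th (a + int n) \<ge> \<gamma>" by (rule gap)
    then show ?case using Suc by (simp add: algebra_simps)
  qed
  have ubound: "u a b \<ge> c * real_of_int (g (b - a))" for a b
  proof -
    define k where "k = (b - a) mod int m"
    define q where "q = (b - a) div int m"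
    have k: "0 \<le> k" "k < int m" unfolding k_def using m1 by auto
    have bq: "b = (a + k) + q * int m" unfolding k_def q_def by simp
    have "th b = th (a + k) + q" using per_th[where th=th and m=m, OF cyclic] bq by simp
    then have fb: "f (th b) = f (th (a + k))" using per_f[where f=f, OF periodic] by simp
    have gk: "g (b - a) = min k (int m - k)" unfolding g_def k_def by simp
    have c0: "c \<ge> 0" unfolding c_def using l0 L1pos L2pos by simp
    show ?thesis
    proof (cases "k = 0")
      case True
      then show ?thesis using gk unfolding u_def by simp
    next
      case False
      define D where "D = th (a + k) - th a"
      have D0: "D > 0" unfolding D_def using smono[where n="nat k" and k=a] False k by simp
      have D1: "th a + 1 - th (a + k) \<ge> real_of_int (int m - k) * \<gamma>"
        using gaps[where a="a + k" and n="nat (int m - k)"] cyclic[of a] k by (simp add: algebra_simps)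
      have D2: "D \<ge> real_of_int k * \<gamma>" unfolding D_def using gaps[where a=a and n="nat k"] k by simp
      have "D < 1" using D1 unfolding D_def
        using smono[where n="nat (int m - k)" and k="a + k"] k cyclic[of a] by (simp add: algebra_simps)
      then have "frac D = D" using D0 by (simp add: frac_eq)
      then have dr: "dRZ (th (a + k)) (th a) = min D (1 - D)" unfolding dRZ_def D_def by simp
      have "min D (1 - D) \<ge> \<gamma> * real_of_int (min k (int m - k))"
      proof -
        have g0: "\<gamma> \<ge> 0" unfolding \<gamma>_def using l0 L2pos by simp
        have "\<gamma> * real_of_int (min k (int m - k)) \<le> \<gamma> * real_of_int k"
          by (intro mult_left_mono g0) simp
        moreover have "\<gamma> * real_of_int (min k (int m - k)) \<le> \<gamma> * real_of_int (int m - k)"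
          by (intro mult_left_mono g0) simp
        ultimately show ?thesis using D1 D2 unfolding D_def by (simp add: algebra_simps)
      qed
      then have "L1 * min D (1 - D) \<ge> L1 * (\<gamma> * real_of_int (min k (int m - k)))"
        using L1pos by simp
      moreover have "u a b \<ge> L1 * min D (1 - D)"
        using bilip[of "th (a + k)" "th a"] dr fb unfolding u_def Delta_def by simp
      ultimately show ?thesis using gk unfolding c_def \<gamma>_def by simp
    qed
  qed
  have c0: "c \<ge> 0" unfolding c_def using l0 L1pos L2pos by simp
  define x where "x = j - i"
  have ax: "\<bar>i - j\<bar> = \<bar>x\<bar>" unfolding x_def by simp
  have x2: "2 * \<bar>x\<bar> \<le> int m" using ij unfolding ax by linarith
  have gpos: "g y \<ge> 0" for y
  proof -
    have "y mod int m < int m" "0 \<le> y mod int m" using m1 by auto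
    then show ?thesis unfolding g_def by auto
  qed
  have gx: "g x = \<bar>x\<bar>" unfolding g_def using g_exact[OF m1 x2] .
  have glip: "g (x + t) \<ge> \<bar>x\<bar> - \<bar>t\<bar>" for t unfolding g_def using g_lip[OF m1 x2, of "x + t"] by simp
  have gex: "2 * \<bar>y\<bar> \<le> int m \<Longrightarrow> g y = \<bar>y\<bar>" for y unfolding g_def using g_exact[OF m1] by simp
  have ub: "u a b \<ge> c * real_of_int (g y)" if "y = b - a" for a b y using ubound[where a=a and b=b] that by simp
  have u00: "u i j \<ge> c * real_of_int (g x)" by (rule ub) (simp add: x_def)
  have u10: "u (i+1) j \<ge> c * real_of_int (g (x - 1))" by (rule ub) (simp add: x_def)
  have u01: "u i (j+1) \<ge> c * real_of_int (g (x + 1))" by (rule ub) (simp add: x_def)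
  have u11: "u (i+1) (j+1) \<ge> c * real_of_int (g x)" by (rule ub) (simp add: x_def)
  have u02: "u i (j+2) \<ge> c * real_of_int (g (x + 2))" by (rule ub) (simp add: x_def)
  have u12: "u (i+1) (j+2) \<ge> c * real_of_int (g (x + 1))" by (rule ub) (simp add: x_def)
  have cm: "c * real_of_int A \<ge> c * real_of_int B" if "A \<ge> B" for A B
    using that c0 by (intro mult_left_mono) auto
  have hc: "polylen f th m * L1 / L2 * (z / real m) = c * z" for z
    unfolding c_def l_def by (simp add: field_simps)
  have hc2: "polylen f th m * L1 / (2 * L2) * (z / real m) = c * z / 2" for z
    unfolding c_def l_def by (simp add: field_simps)
  have gm1: "g (x - 1) \<ge> \<bar>x\<bar> - 1" using glip[of "-1"] by simp
  have gp1: "g (x + 1) \<ge> \<bar>x\<bar> - 1" using glip[of "1"] by simp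
  have gp2: "g (x + 2) \<ge> \<bar>x\<bar> - 2" using glip[of "2"] by simp
  have I1: "u i j + u (i+1) j \<ge> c * (2 * \<bar>x\<bar> - 1)"
  proof -
    have "c * real_of_int (g x + g (x - 1)) \<ge> c * real_of_int (2 * \<bar>x\<bar> - 1)"
      using gx gm1 by (intro cm) linarith
    then show ?thesis using u00 u10 by (simp add: algebra_simps)
  qed
  have I2: "u i (j+1) + u (i+1) (j+1) \<ge> c * (2 * \<bar>x\<bar> - 1)"
  proof -
    have "c * real_of_int (g x + g (x + 1)) \<ge> c * real_of_int (2 * \<bar>x\<bar> - 1)"
      using gx gp1 by (intro cm) linarith
    then show ?thesis using u01 u11 by (simp add: algebra_simps)
  qed
  have I4: "u i (j+1) + u (i+1) (j+1) + u i (j+2) + u (i+1) (j+2) \<ge> c * (2 * \<bar>x\<bar>)"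
  proof -
    have e1: "x = 1 \<Longrightarrow> g (x + 1) = 2" using gex[of 2] m4 by simp
    have e2: "x = -1 \<Longrightarrow> g (x + 2) = 1" using gex[of 1] m4 by simp
    have "x = 0 \<or> x = 1 \<or> x = -1 \<or> \<bar>x\<bar> \<ge> 2" by linarith
    then have "2 * g (x + 1) + g x + g (x + 2) \<ge> 2 * \<bar>x\<bar>"
      using e1 e2 gx gp1 gp2 gpos[of "x+1"] gpos[of "x+2"] by auto
    then have "c * real_of_int (2 * g (x + 1) + g x + g (x + 2)) \<ge> c * real_of_int (2 * \<bar>x\<bar>)"
      by (intro cm)
    then show ?thesis using u01 u11 u02 u12 by (simp add: algebra_simps)
  qed
  have I3: "u i j + u (i+1) (j+1) + u (i+1) j + u i (j+1) \<ge> c * (4 * \<bar>x\<bar> - 1)"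
  proof (cases "2 * \<bar>x\<bar> + 2 \<le> int m")
    case True
    have "2 * \<bar>x - 1\<bar> \<le> int m" "2 * \<bar>x + 1\<bar> \<le> int m" using True by arith+
    then have "g (x - 1) = \<bar>x - 1\<bar>" "g (x + 1) = \<bar>x + 1\<bar>" using gex by blast+
    moreover have "\<bar>x - 1\<bar> + \<bar>x + 1\<bar> \<ge> 2 * \<bar>x\<bar>" by (simp add: abs_if)
    ultimately have "g (x - 1) + g (x + 1) \<ge> 2 * \<bar>x\<bar>" by simp
    then have "2 * g x + g (x - 1) + g (x + 1) \<ge> 4 * \<bar>x\<bar> - 1" using gx by simp
    then have "c * real_of_int (2 * g x + g (x - 1) + g (x + 1)) \<ge> c * real_of_int (4 * \<bar>x\<bar> - 1)"
      by (intro cm)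
    then show ?thesis using u00 u11 u10 u01 by (simp add: algebra_simps)
  next
    case False
    define T where "T = c * \<bar>x\<bar>"
    have xge: "2 * \<bar>x\<bar> \<ge> int m - 1" using False by linarith
    have x1: "\<bar>x\<bar> \<ge> 1" using xge m4 by linarith
    have Tc: "T \<ge> c" unfolding T_def using c0 x1
      by (metis mult.right_neutral mult_left_mono of_int_1 of_int_le_iff)
    have "c * real_of_int (g x) = T" unfolding T_def gx by simp
    then have d1: "u i j \<ge> T" "u (i+1) (j+1) \<ge> T" using u00 u11 by auto
    have "c * real_of_int (g (x - 1)) \<ge> c * real_of_int (\<bar>x\<bar> - 1)" using gm1 by (intro cm)
    then have a1: "u (i+1) j \<ge> T - c" using u10 unfolding T_def by (simp add: algebra_simps)
    have "c * real_of_int (g (x + 1)) \<ge> c * real_of_int (\<bar>x\<bar> - 1)" using gp1 by (intro cm)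
    then have b1: "u i (j+1) \<ge> T - c" using u01 unfolding T_def by (simp add: algebra_simps)
    have q: "(u i j)^2 + (u (i+1) (j+1))^2 \<le> (u (i+1) j)^2 + (u i (j+1))^2 + 2 * l * l"
      using quad_ident[of "f (th j)" "f (th i)" "f (th (j+1))" "f (th (i+1))"] lall[of i] lall[of j]
      unfolding u_def Delta_def by simp
    have "c^2 * (real m - 2) \<ge> 2 * l^2"
    proof -
      have "c^2 * (real m - 2) = l^2 * ((real m - 2) * L1^2) / L2^2"
        unfolding c_def by (simp add: power2_eq_square field_simps)
      also have "\<dots> \<ge> l^2 * (2 * L2^2) / L2^2"
        using mbig L2pos by (intro divide_right_mono mult_left_mono) auto
      also have "l^2 * (2 * L2^2) / L2^2 = 2 * l^2" using L2pos by simp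
      finally show ?thesis .
    qed
    moreover have "2 * T * c \<ge> c^2 * (real m - 1)"
    proof -
      have "real m - 1 \<le> 2 * real_of_int \<bar>x\<bar>" using xge by linarith
      then have "c^2 * (real m - 1) \<le> c^2 * (2 * real_of_int \<bar>x\<bar>)" by (intro mult_left_mono) auto
      then show ?thesis unfolding T_def by (simp add: power2_eq_square algebra_simps)
    qed
    ultimately have e: "2 * T * c \<ge> c^2 + 2 * l * l" by (simp add: power2_eq_square algebra_simps)
    have "u i j + u (i+1) (j+1) + u (i+1) j + u i (j+1) \<ge> 4 * T - c"
      by (rule key4[OF d1 a1 b1 Tc c0 q e])
    then show ?thesis unfolding T_def by (simp add: algebra_simps)
  qed
  have A1: "Ai u i j \<ge> c * (real_of_int \<bar>x\<bar> - 1/2)"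
  proof -
    have "c * real_of_int (2 * \<bar>x\<bar> - 1) = 2 * (c * (real_of_int \<bar>x\<bar> - 1/2))"
      by (simp add: algebra_simps)
    then show ?thesis using I1 unfolding Ai_def by (intro half_le) (simp only:)
  qed
  have A2: "Ai u i (j + 1) \<ge> c * (real_of_int \<bar>x\<bar> - 1/2)"
  proof -
    have "c * real_of_int (2 * \<bar>x\<bar> - 1) = 2 * (c * (real_of_int \<bar>x\<bar> - 1/2))"
      by (simp add: algebra_simps)
    then show ?thesis using I2 unfolding Ai_def by (intro half_le) (simp only:)
  qed
  have A3: "Aij u i j \<ge> c * (real_of_int \<bar>x\<bar> - 1/4)"
  proof -
    have "c * real_of_int (4 * \<bar>x\<bar> - 1) = 4 * (c * (real_of_int \<bar>x\<bar> - 1/4))"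
      by (simp add: algebra_simps)
    then show ?thesis using I3 unfolding Aij_def by (intro quarter_le) (simp only: add_ac)
  qed
  have A4: "Aij u i (j + 1) \<ge> c * real_of_int \<bar>x\<bar> / 2"
  proof -
    have "c * real_of_int (2 * \<bar>x\<bar>) = 4 * (c * real_of_int \<bar>x\<bar> / 2)"
      by (simp add: algebra_simps)
    moreover have e: "j + 1 + 1 = j + 2" by simp
    ultimately show ?thesis using I4 unfolding Aij_def e by (intro quarter_le) (simp only: add_ac)
  qed
  have E1: "polylen f th m * L1 / L2 * ((real_of_int \<bar>i - j\<bar> - 1/2) / real m) = c * (real_of_int \<bar>x\<bar> - 1/2)"
    unfolding ax by (rule hc)
  have E3: "polylen f th m * L1 / L2 * ((real_of_int \<bar>i - j\<bar> - 1/4) / real m) = c * (real_of_int \<bar>x\<bar> - 1/4)"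
    unfolding ax by (rule hc)
  have E4: "polylen f th m * L1 / (2 * L2) * (real_of_int \<bar>i - j\<bar> / real m) = c * real_of_int \<bar>x\<bar> / 2"
    unfolding ax by (rule hc2)
  have U: "(\<lambda>a b. norm (Delta f th a b)) = u" by (simp add: u_def)
  have G: "c * (real_of_int \<bar>x\<bar> - 1/2) \<le> Ai u i j \<and> c * (real_of_int \<bar>x\<bar> - 1/2) \<le> Ai u i (j + 1)
     \<and> c * (real_of_int \<bar>x\<bar> - 1/4) \<le> Aij u i j \<and> c * real_of_int \<bar>x\<bar> / 2 \<le> Aij u i (j + 1)"
    using A1 A2 A3 A4 by (intro conjI)
  from G[unfolded u_def] show ?thesis
    unfolding Let_def E1 E3 E4 .
qed

theorem mainTheorem5:
  fixes f :: "real \<Rightarrow> real ^ 'n"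
    and L1 L2 :: real
    and \<theta> :: "nat \<Rightarrow> int \<Rightarrow> real"
  assumes periodic: "\<And>t. f (t + 1) = f t"
    and L1pos: "0 < L1" and L12: "L1 \<le> L2"
    and bilip: "\<And>s t. L1 * dRZ s t \<le> norm (f s - f t) \<and> norm (f s - f t) \<le> L2 * dRZ s t"
    and nonneg: "\<And>m. m \<ge> 1 \<Longrightarrow> 0 \<le> \<theta> m 1"
    and incr: "\<And>m k. m \<ge> 1 \<Longrightarrow> 1 \<le> k \<Longrightarrow> k < int m \<Longrightarrow> \<theta> m k < \<theta> m (k + 1)"
    and below1: "\<And>m. m \<ge> 1 \<Longrightarrow> \<theta> m (int m) < 1"
    and cyclic: "\<And>m k. m \<ge> 1 \<Longrightarrow> \<theta> m (k + int m) = \<theta> m k + 1"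
    and equilateral: "\<And>m k. m \<ge> 1 \<Longrightarrow> 1 \<le> k \<Longrightarrow> k \<le> int m \<Longrightarrow>
        norm (Delta f (\<theta> m) k (k + 1)) = polylen f (\<theta> m) m / real m"
  shows "\<exists>M. \<forall>m\<ge>M. \<forall>i j :: int. \<bar>i - j\<bar> \<le> int (m div 2) \<longrightarrow>
     (let Lm = polylen f (\<theta> m) m;
          u = (\<lambda>a b. norm (Delta f (\<theta> m) a b))
      in Ai u i j \<ge> Lm * L1 / L2 * ((real_of_int \<bar>i - j\<bar> - 1/2) / real m)
       \<and> Ai u i (j + 1) \<ge> Lm * L1 / L2 * ((real_of_int \<bar>i - j\<bar> - 1/2) / real m)
       \<and> Aij u i j \<ge> Lm * L1 / L2 * ((real_of_int \<bar>i - j\<bar> - 1/4) / real m)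
       \<and> Aij u i (j + 1) \<ge> Lm * L1 / (2 * L2) * (real_of_int \<bar>i - j\<bar> / real m))"
proof -
  define M where "M = max 4 (nat \<lceil>2 * L2^2 / L1^2\<rceil> + 2)"
  have L2pos: "L2 > 0" using L1pos L12 by linarith
  show ?thesis
  proof (intro exI allI impI)
    fix m :: nat and i j :: int
    assume mM: "M \<le> m" and ij: "\<bar>i - j\<bar> \<le> int (m div 2)"
    have m4: "m \<ge> 4" using mM unfolding M_def by simp
    have m1: "m \<ge> 1" using m4 by simp
    have "real m - 2 \<ge> 2 * L2^2 / L1^2"
    proof -
      have "nat \<lceil>2 * L2^2 / L1^2\<rceil> + 2 \<le> m" using mM unfolding M_def by simp
      then have "real (nat \<lceil>2 * L2^2 / L1^2\<rceil>) + 2 \<le> real m" by linarith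
      moreover have "2 * L2^2 / L1^2 \<le> real (nat \<lceil>2 * L2^2 / L1^2\<rceil>)"
      proof -
        have "2 * L2^2 / L1^2 \<le> real_of_int \<lceil>2 * L2^2 / L1^2\<rceil>" by (rule le_of_int_ceiling)
        moreover have "real_of_int \<lceil>2 * L2^2 / L1^2\<rceil> \<le> real (nat \<lceil>2 * L2^2 / L1^2\<rceil>)"
          by (cases "\<lceil>2 * L2^2 / L1^2\<rceil> \<ge> 0") auto
        ultimately show ?thesis by linarith
      qed
      ultimately show ?thesis by linarith
    qed
    then have mbig: "2 * L2^2 \<le> (real m - 2) * L1^2" using L1pos by (simp add: field_simps)
    show "let Lm = polylen f (\<theta> m) m;
          u = (\<lambda>a b. norm (Delta f (\<theta> m) a b))
      in Ai u i j \<ge> Lm * L1 / L2 * ((real_of_int \<bar>i - j\<bar> - 1/2) / real m)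
       \<and> Ai u i (j + 1) \<ge> Lm * L1 / L2 * ((real_of_int \<bar>i - j\<bar> - 1/2) / real m)
       \<and> Aij u i j \<ge> Lm * L1 / L2 * ((real_of_int \<bar>i - j\<bar> - 1/4) / real m)
       \<and> Aij u i (j + 1) \<ge> Lm * L1 / (2 * L2) * (real_of_int \<bar>i - j\<bar> / real m)"
      by (rule main_m[where th="\<theta> m", OF periodic L1pos L12 bilip nonneg[OF m1] incr[OF m1]
            below1[OF m1] cyclic[OF m1] equilateral[OF m1] m4 mbig ij]) 
  qed
qed

end
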